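(* Let $S$ be a homogroup with $\mathrm{Ker}(S)=\mathrm{Red}(S)$. Then every direct power $\Pi S=\prod_{i\in I}\mathrm{Pr}(S)$ is $\mathcal{L}_{s\text{-}pred}(\Pi S)$-equationally Noetherian.
   Context: A semigroup $S$ is a homogroup if it has a kernel $\mathrm{Ker}(S)$ (minimal two-sided ideal) which is a group. $\mathrm{Red}(S)=\{ab\mid a,b\in S\}$ is the set of reducible elements. $\mathcal{L}_{s\text{-}pred}=\{M\}$ with $M$ ternary; $\mathrm{Pr}(S)$ is the structure on $S$ with $M(x,y,z)\Leftrightarrow xy=z$. The direct power consists of sequences $[a_i\mid i\in I]$ with $M$ holding coordinatewise; $\mathcal{L}_{s\text{-}pred}(\Pi S)$ adds a constant symbol for every element of the power. Equations are atomic formulas ($M(t_1,t_2,t_3)$ or $t_1=t_2$, each $t_k$ a variable or constant); systems are sets of equations in a fixed finite set of variables; the structure is equationally Noetherian in this language if every system is equivalent (same solution set) to a finite subsystem. *)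

theory Defs
  imports "HOL-Algebra.Group"
begin

section \<open>Semigroup notions (S is the whole type 'a of class semigroup_mult)\<close>

definition two_sided_ideal :: "'a::semigroup_mult set \<Rightarrow> bool" where
  "two_sided_ideal J \<longleftrightarrow> J \<noteq> {} \<and> (\<forall>s j. j \<in> J \<longrightarrow> s * j \<in> J \<and> j * s \<in> J)"

definition is_kernel :: "'a::semigroup_mult set \<Rightarrow> bool" where
  "is_kernel K \<longleftrightarrow> two_sided_ideal K \<and> (\<forall>J. two_sided_ideal J \<longrightarrow> J \<subseteq> K \<longrightarrow> J = K)"

definition is_subgroup_of_sg :: "'a::semigroup_mult set \<Rightarrow> bool" where
  "is_subgroup_of_sg K \<longleftrightarrow> (\<exists>e. group \<lparr>carrier = K, monoid.mult = (*), one = e\<rparr>)"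

definition Red :: "'a::semigroup_mult set" where
  "Red = {a * b | a b. True}"

section \<open>Equations in the language {M} with constants for all elements\<close>

datatype 'c sterm = SVar nat | SConst 'c

datatype 'c sequation = EqM "'c sterm" "'c sterm" "'c sterm" | EqE "'c sterm" "'c sterm"

fun tvars :: "'c sterm \<Rightarrow> nat set" where
  "tvars (SVar n) = {n}"
| "tvars (SConst c) = {}"

fun evars :: "'c sequation \<Rightarrow> nat set" where
  "evars (EqM t1 t2 t3) = tvars t1 \<union> tvars t2 \<union> tvars t3"
| "evars (EqE t1 t2) = tvars t1 \<union> tvars t2"

fun teval :: "(nat \<Rightarrow> 'c) \<Rightarrow> 'c sterm \<Rightarrow> 'c" where
  "teval \<sigma> (SVar n) = \<sigma> n"
| "teval \<sigma> (SConst c) = c"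

fun esat :: "('c \<Rightarrow> 'c \<Rightarrow> 'c \<Rightarrow> bool) \<Rightarrow> (nat \<Rightarrow> 'c) \<Rightarrow> 'c sequation \<Rightarrow> bool" where
  "esat M \<sigma> (EqM t1 t2 t3) = M (teval \<sigma> t1) (teval \<sigma> t2) (teval \<sigma> t3)"
| "esat M \<sigma> (EqE t1 t2) = (teval \<sigma> t1 = teval \<sigma> t2)"

definition solutions :: "('c \<Rightarrow> 'c \<Rightarrow> 'c \<Rightarrow> bool) \<Rightarrow> 'c sequation set \<Rightarrow> (nat \<Rightarrow> 'c) set" where
  "solutions M Ss = {\<sigma>. \<forall>e\<in>Ss. esat M \<sigma> e}"

definition eqn_noetherian :: "('c \<Rightarrow> 'c \<Rightarrow> 'c \<Rightarrow> bool) \<Rightarrow> bool" where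
  "eqn_noetherian M \<longleftrightarrow>
     (\<forall>V Ss. finite V \<longrightarrow> (\<forall>e\<in>Ss. evars e \<subseteq> V) \<longrightarrow>
        (\<exists>S0 \<subseteq> Ss. finite S0 \<and> solutions M S0 = solutions M Ss))"

text \<open>Pr(S): M(x,y,z) iff xy = z.  Direct power indexed by type 'i: coordinatewise.\<close>
definition power_M :: "('i \<Rightarrow> 'a::semigroup_mult) \<Rightarrow> ('i \<Rightarrow> 'a) \<Rightarrow> ('i \<Rightarrow> 'a) \<Rightarrow> bool" where
  "power_M x y z \<longleftrightarrow> (\<forall>i. x i * y i = z i)"

end

theory Submission
  imports Defs
begin

lemma transfer_lemmas:
  assumes "\<exists>K::'a::semigroup_mult set. is_kernel K \<and> is_subgroup_of_sg K \<and> K = Red"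
  shows "\<forall>x y z w::'a. x * y = x * z \<longrightarrow> w * y = w * z"
    and "\<forall>x y z w::'a. y * x = z * x \<longrightarrow> y * w = z * w"
proof -
  from assms have "is_subgroup_of_sg (Red::'a set)" by blast
  then obtain e where G: "group \<lparr>carrier = (Red::'a set), monoid.mult = (*), one = e\<rparr>"
    unfolding is_subgroup_of_sg_def by blast
  have prod: "\<And>x y::'a. x * y \<in> Red" unfolding Red_def by blast
  have eK: "e \<in> Red" using monoid.one_closed[OF group.is_monoid[OF G]] by simp
  have lone: "\<And>k. k \<in> Red \<Longrightarrow> e * k = k" using monoid.l_one[OF group.is_monoid[OF G]] by simp
  have rone: "\<And>k. k \<in> Red \<Longrightarrow> k * e = k" using monoid.r_one[OF group.is_monoid[OF G]] by simp
  have inv: "\<And>k. k \<in> Red \<Longrightarrow> \<exists>k'\<in>Red. k' * k = e" using group.l_inv_ex[OF G] by simp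
  have cancel: "\<And>g h1 h2::'a. g \<in> Red \<Longrightarrow> h1 \<in> Red \<Longrightarrow> h2 \<in> Red \<Longrightarrow> g * h1 = g * h2 \<Longrightarrow> h1 = h2"
  proof -
    fix g h1 h2 :: 'a assume a: "g \<in> Red" "h1 \<in> Red" "h2 \<in> Red" "g * h1 = g * h2"
    obtain g' where "g' \<in> Red" "g' * g = e" using inv a(1) by blast
    then have "g' * (g * h1) = g' * (g * h2)" using a by simp
    then have "e * h1 = e * h2" using \<open>g' * g = e\<close> by (simp add: mult.assoc[symmetric])
    then show "h1 = h2" using lone a by simp
  qed
  have rcancel: "\<And>g h1 h2::'a. g \<in> Red \<Longrightarrow> h1 \<in> Red \<Longrightarrow> h2 \<in> Red \<Longrightarrow> h1 * g = h2 * g \<Longrightarrow> h1 = h2"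
  proof -
    fix g h1 h2 :: 'a assume a: "g \<in> Red" "h1 \<in> Red" "h2 \<in> Red" "h1 * g = h2 * g"
    have "\<exists>g'\<in>Red. g * g' = e" using group.r_inv_ex[OF G] a(1) by simp
    then obtain g' where "g' \<in> Red" "g * g' = e" by blast
    then have "(h1 * g) * g' = (h2 * g) * g'" using a by simp
    then have "h1 * e = h2 * e" using \<open>g * g' = e\<close> by (simp add: mult.assoc)
    then show "h1 = h2" using rone a by simp
  qed
  have ee: "e * e = e" using lone eK by simp
  have central: "\<And>s::'a. e * s = s * e"
  proof -
    fix s :: 'a
    have "e * s = (e * s) * e" using rone prod by metis
    also have "\<dots> = e * (s * e)" by (simp add: mult.assoc)
    also have "\<dots> = s * e" using lone prod by metis
    finally show "e * s = s * e" .
  qed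
  have phi: "\<And>x y::'a. x * y = (e * x) * (e * y)"
  proof -
    fix x y :: 'a
    have "(e * x) * (e * y) = e * (x * e) * y" by (simp add: mult.assoc)
    also have "\<dots> = e * (e * x) * y" using central by simp
    also have "\<dots> = e * (x * y)" using ee by (simp add: mult.assoc[symmetric])
    also have "\<dots> = x * y" using lone prod by metis
    finally show "x * y = (e * x) * (e * y)" by simp
  qed
  show "\<forall>x y z w::'a. x * y = x * z \<longrightarrow> w * y = w * z"
  proof (intro allI impI)
    fix x y z w :: 'a assume "x * y = x * z"
    then have "(e * x) * (e * y) = (e * x) * (e * z)" using phi by metis
    then have "e * y = e * z" using cancel prod by blast
    then show "w * y = w * z" using phi by metis
  qed
  show "\<forall>x y z w::'a. y * x = z * x \<longrightarrow> y * w = z * w"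
  proof (intro allI impI)
    fix x y z w :: 'a assume "y * x = z * x"
    then have "(e * y) * (e * x) = (e * z) * (e * x)" using phi by metis
    then have "e * y = e * z" using rcancel prod by blast
    then show "y * w = z * w" using phi by metis
  qed
qed

lemma slev:
  fixes a1 a2 a3 b1 b2 b3 c1 c2 c3 d1 d2 d3 :: "'a::semigroup_mult"
  assumes L: "\<forall>x y z w::'a. x * y = x * z \<longrightarrow> w * y = w * z"
    and R: "\<forall>x y z w::'a. y * x = z * x \<longrightarrow> y * w = z * w"
    and p1: "(a1 = b1 \<and> c1 = d1) \<or> (a1 = c1 \<and> b1 = d1)"
    and p2: "(a2 = b2 \<and> c2 = d2) \<or> (a2 = c2 \<and> b2 = d2)"
    and p3: "(a3 = b3 \<and> c3 = d3) \<or> (a3 = c3 \<and> b3 = d3)"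
    and e1: "a1 * a2 = a3" and e2: "b1 * b2 = b3" and e3: "c1 * c2 = c3"
  shows "d1 * d2 = d3"
  using p1 p2 p3
proof (elim disjE conjE)
qed (use e1 e2 e3 L R in metis)+

abbreviation "upat \<equiv> map_sequation (\<lambda>_. ())"

lemma tpat:
  assumes "map_sterm (\<lambda>_. ()) t = map_sterm (\<lambda>_. ()) u"
  shows "(teval \<sigma> t = teval \<sigma> u \<and> teval \<tau> t = teval \<tau> u) \<or>
         (teval \<sigma> t = teval \<tau> t \<and> teval \<sigma> u = teval \<tau> u)"
  using assms by (cases t; cases u) auto

lemma tpat_i:
  assumes "map_sterm (\<lambda>_. ()) t = map_sterm (\<lambda>_. ()) u"
  shows "(teval \<sigma> t i = teval \<sigma> u i \<and> teval \<tau> t i = teval \<tau> u i) \<or>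
         (teval \<sigma> t i = teval \<tau> t i \<and> teval \<sigma> u i = teval \<tau> u i)"
  using tpat[OF assms, of \<sigma> \<tau>] by auto

lemma key:
  fixes \<sigma> \<tau> :: "nat \<Rightarrow> 'i \<Rightarrow> 'a::semigroup_mult"
  assumes L: "\<forall>x y z w::'a. x * y = x * z \<longrightarrow> w * y = w * z"
    and R: "\<forall>x y z w::'a. y * x = z * x \<longrightarrow> y * w = z * w"
    and P: "upat E1 = upat E2"
    and s1: "esat power_M \<sigma> E1" and s2: "esat power_M \<sigma> E2" and t1: "esat power_M \<tau> E1"
  shows "esat power_M \<tau> E2"
proof (cases E1)
  case (EqM t1 t2 t3)
  then obtain u1 u2 u3 where E2: "E2 = EqM u1 u2 u3" using P by (cases E2) auto
  have q1: "map_sterm (\<lambda>_. ()) t1 = map_sterm (\<lambda>_. ()) u1"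
   and q2: "map_sterm (\<lambda>_. ()) t2 = map_sterm (\<lambda>_. ()) u2"
   and q3: "map_sterm (\<lambda>_. ()) t3 = map_sterm (\<lambda>_. ()) u3" using P EqM E2 by auto
  show ?thesis unfolding E2 esat.simps power_M_def
  proof
    fix i
    show "teval \<tau> u1 i * teval \<tau> u2 i = teval \<tau> u3 i"
      by (rule slev[OF L R tpat_i[OF q1] tpat_i[OF q2] tpat_i[OF q3]])
         (use s1 s2 t1 EqM E2 in \<open>auto simp: power_M_def\<close>)
  qed
next
  case (EqE t1 t2)
  then obtain u1 u2 where E2: "E2 = EqE u1 u2" using P by (cases E2) auto
  have q1: "map_sterm (\<lambda>_. ()) t1 = map_sterm (\<lambda>_. ()) u1"
   and q2: "map_sterm (\<lambda>_. ()) t2 = map_sterm (\<lambda>_. ()) u2" using P EqE E2 by auto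
  show ?thesis using tpat[OF q1, of \<sigma> \<tau>] tpat[OF q2, of \<sigma> \<tau>] s1 s2 t1 EqE E2 by auto
qed

lemma fin_pat:
  assumes "finite V"
  shows "finite {p :: unit sequation. evars p \<subseteq> V}"
proof -
  define T where "T = insert (SConst ()) (SVar ` V)"
  have fT: "finite T" using assms T_def by simp
  have tT: "\<And>t :: unit sterm. tvars t \<subseteq> V \<Longrightarrow> t \<in> T"
  proof -
    fix t :: "unit sterm" assume "tvars t \<subseteq> V" then show "t \<in> T" unfolding T_def by (cases t) auto
  qed
  have "{p :: unit sequation. evars p \<subseteq> V} \<subseteq>
        (\<lambda>(a,b,c). EqM a b c) ` (T \<times> T \<times> T) \<union> (\<lambda>(a,b). EqE a b) ` (T \<times> T)"
  proof
    fix p :: "unit sequation" assume "p \<in> {p. evars p \<subseteq> V}"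
    then show "p \<in> (\<lambda>(a,b,c). EqM a b c) ` (T \<times> T \<times> T) \<union> (\<lambda>(a,b). EqE a b) ` (T \<times> T)"
      proof (cases p)
      case (EqM a b c) then show ?thesis using \<open>p \<in> {p. evars p \<subseteq> V}\<close>
        by (auto intro!: image_eqI[where x="(a,b,c)"] tT)
    next
      case (EqE a b) then show ?thesis using \<open>p \<in> {p. evars p \<subseteq> V}\<close>
        by (auto intro!: image_eqI[where x="(a,b)"] tT)
    qed
  qed
  then show ?thesis using fT by (meson finite_SigmaI finite_Un finite_imageI finite_subset)
qed

lemma evars_upat: "evars (upat e) = evars e"
proof (cases e)
  case (EqM t1 t2 t3) then show ?thesis by (cases t1; cases t2; cases t3) auto
next
  case (EqE t1 t2) then show ?thesis by (cases t1; cases t2) auto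
qed

theorem theorem5:
  assumes "\<exists>K::'a::semigroup_mult set. is_kernel K \<and> is_subgroup_of_sg K \<and> K = Red"
  shows "eqn_noetherian (power_M :: ('i \<Rightarrow> 'a) \<Rightarrow> ('i \<Rightarrow> 'a) \<Rightarrow> ('i \<Rightarrow> 'a) \<Rightarrow> bool)"
  unfolding eqn_noetherian_def
proof (intro allI impI)
  fix V and Ss :: "('i \<Rightarrow> 'a) sequation set"
  assume fV: "finite V" and vs: "\<forall>e\<in>Ss. evars e \<subseteq> V"
  note L = transfer_lemmas(1)[OF assms] and R = transfer_lemmas(2)[OF assms]
  show "\<exists>S0\<subseteq>Ss. finite S0 \<and> solutions power_M S0 = solutions power_M Ss"
  proof (cases "\<exists>e1\<in>Ss. \<exists>e2\<in>Ss. upat e1 = upat e2 \<and> (\<exists>\<tau>. esat power_M \<tau> e1 \<and> \<not> esat power_M \<tau> e2)")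
    case True
    then obtain e1 e2 \<tau> where e: "e1 \<in> Ss" "e2 \<in> Ss" "upat e1 = upat e2"
      "esat power_M \<tau> e1" "\<not> esat power_M \<tau> e2" by blast
    have "solutions power_M {e1, e2} = {}"
      unfolding solutions_def using key[OF L R e(3) _ _ e(4)] e(5) by blast
    moreover have "solutions power_M Ss \<subseteq> solutions power_M {e1, e2}"
      unfolding solutions_def using e(1,2) by blast
    ultimately show ?thesis using e(1,2) by (intro exI[of _ "{e1,e2}"]) auto
  next
    case False
    define r where "r p = (SOME e. e \<in> Ss \<and> upat e = p)" for p
    have r: "\<And>e. e \<in> Ss \<Longrightarrow> r (upat e) \<in> Ss \<and> upat (r (upat e)) = upat e"
      unfolding r_def by (rule someI_ex) blast
    define S0 where "S0 = r ` upat ` Ss"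
    have "upat ` Ss \<subseteq> {p. evars p \<subseteq> V}" using vs evars_upat by auto
    then have "finite (upat ` Ss)" using fin_pat[OF fV] finite_subset by blast
    then have f0: "finite S0" unfolding S0_def by simp
    have sub: "S0 \<subseteq> Ss" unfolding S0_def using r by auto
    have "solutions power_M S0 \<subseteq> solutions power_M Ss"
    proof
      fix \<sigma> assume "\<sigma> \<in> solutions power_M S0"
      then have s0: "\<forall>e\<in>S0. esat power_M \<sigma> e" unfolding solutions_def by blast
      have "esat power_M \<sigma> e" if "e \<in> Ss" for e
      proof -
        have "r (upat e) \<in> S0" unfolding S0_def using that by blast
        then have "esat power_M \<sigma> (r (upat e))" using s0 by blast
        then show ?thesis using False r[OF that] that by metis
      qed
      then show "\<sigma> \<in> solutions power_M Ss" unfolding solutions_def by blast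
    qed
    moreover have "solutions power_M Ss \<subseteq> solutions power_M S0"
      unfolding solutions_def using sub by blast
    ultimately show ?thesis using f0 sub by blast
  qed
qed

end
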